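(* Let $\mathbb{Q}$ be a path measure on $[0,T]$ in $\mathbb{R}^d$, let $\Pi^*$ be a distribution on $\mathbb{R}^d$, let $\mathbb{Q}^x=\mathbb{Q}(\cdot\mid Z_T=x)$ and $\mathbb{Q}^{\Pi^*}=\int\mathbb{Q}^x\,\Pi^*(dx)$. Assume the Radon–Nikodym derivative $\pi^*(z)=\frac{d\Pi^*}{d\mathbb{Q}_T}(z)$ exists and is positive everywhere. Then $\mathbb{Q}^{\Pi^*}$ is Markov if and only if $\mathbb{Q}$ is Markov.
   Context: $\mathbb{Q}_T$ denotes the law of $Z_T$ under $\mathbb{Q}$; $\mathbb{Q}^{\Pi^*}$ is the law of a path obtained by drawing $x\sim\Pi^*$ then $Z\sim\mathbb{Q}^x$. *)

theory Defs
  imports "HOL-Probability.Probability"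
begin

text \<open>Canonical path space of paths on [0,T] with values in a Euclidean space;
  the coordinate process is Z_t(omega) = omega t.\<close>
definition path_space :: "real \<Rightarrow> (real \<Rightarrow> 'a::euclidean_space) measure" where
  "path_space T = PiM {0..T} (\<lambda>_. borel)"

definition past_alg :: "real \<Rightarrow> real \<Rightarrow> (real \<Rightarrow> 'a::euclidean_space) measure" where
  "past_alg T s = sigma (space (path_space T))
     {(\<lambda>\<omega>. \<omega> r) -` B \<inter> space (path_space T) | r B. r \<in> {0..s} \<and> B \<in> sets (borel :: 'a measure)}"

definition present_alg :: "real \<Rightarrow> real \<Rightarrow> (real \<Rightarrow> 'a::euclidean_space) measure" where
  "present_alg T s = vimage_algebra (space (path_space T)) (\<lambda>\<omega>. \<omega> s) (borel :: 'a measure)"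

definition markov_path :: "real \<Rightarrow> (real \<Rightarrow> 'a::euclidean_space) measure \<Rightarrow> bool" where
  "markov_path T M \<longleftrightarrow>
     (\<forall>s t (f :: 'a \<Rightarrow> real). 0 \<le> s \<longrightarrow> s \<le> t \<longrightarrow> t \<le> T \<longrightarrow>
        f \<in> borel_measurable borel \<longrightarrow> bounded (range f) \<longrightarrow>
        (AE \<omega> in M. real_cond_exp M (past_alg T s) (\<lambda>\<omega>. f (\<omega> t)) \<omega>
                   = real_cond_exp M (present_alg T s) (\<lambda>\<omega>. f (\<omega> t)) \<omega>))"

definition terminal_law :: "real \<Rightarrow> (real \<Rightarrow> 'a::euclidean_space) measure \<Rightarrow> 'a measure" where
  "terminal_law T M = distr M borel (\<lambda>\<omega>. \<omega> T)"

text \<open>K is a regular conditional distribution of M given Z_T: K x = M( . | Z_T = x).\<close>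
definition cond_on_terminal :: "real \<Rightarrow> (real \<Rightarrow> 'a::euclidean_space) measure
      \<Rightarrow> ('a \<Rightarrow> (real \<Rightarrow> 'a) measure) \<Rightarrow> bool" where
  "cond_on_terminal T M K \<longleftrightarrow>
     K \<in> measurable borel (prob_algebra (path_space T)) \<and>
     (\<forall>A \<in> sets (path_space T). \<forall>B \<in> sets (borel :: 'a measure).
        emeasure M (A \<inter> {\<omega> \<in> space M. \<omega> T \<in> B})
          = (\<integral>\<^sup>+ x \<in> B. emeasure (K x) A \<partial>terminal_law T M))"

end

theory Submission
  imports Defs
begin
locale pm = finite_measure M for M :: "(real \<Rightarrow> 'a::euclidean_space) measure" +
  fixes T :: real
  assumes sets_eq: "sets M = sets (path_space T)"
begin

abbreviation FF :: "real \<Rightarrow> (real \<Rightarrow> 'a) measure" where "FF s \<equiv> past_alg T s"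
abbreviation GG :: "real \<Rightarrow> (real \<Rightarrow> 'a) measure" where "GG s \<equiv> present_alg T s"

lemma space_eq: "space M = space (path_space T)"
  using sets_eq by (rule sets_eq_imp_space_eq)

lemma meas_Z: "t \<in> {0..T} \<Longrightarrow> (\<lambda>\<omega>. \<omega> t) \<in> measurable M borel"
  unfolding measurable_cong_sets[OF sets_eq refl] path_space_def
  by (rule measurable_component_singleton)

lemma past_gen_sub: "0 \<le> s \<Longrightarrow> s \<le> T \<Longrightarrow>
  {(\<lambda>\<omega>. \<omega> r) -` B \<inter> space (path_space T) | r B. r \<in> {0..s} \<and> B \<in> sets (borel :: 'a measure)}
   \<subseteq> sets M"
proof safe
  fix r and B :: "'a set" assume "r \<in> {0..s}" "B \<in> sets borel" "s \<le> T"
  then have "(\<lambda>\<omega>. \<omega> r) -` B \<inter> space M \<in> sets M"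
    by (intro measurable_sets[OF meas_Z]) auto
  then show "(\<lambda>\<omega>. \<omega> r) -` B \<inter> space (path_space T) \<in> sets M" by (simp add: space_eq)
qed

lemma sets_past: "sets (FF s) = sigma_sets (space (path_space T))
     {(\<lambda>\<omega>. \<omega> r) -` B \<inter> space (path_space T) | r B. r \<in> {0..s} \<and> B \<in> sets (borel :: 'a measure)}"
  unfolding past_alg_def by (rule sets_measure_of) blast

lemma space_past: "space (FF s) = space (path_space T)"
  unfolding past_alg_def by (rule space_measure_of) blast

lemma sub_past: "0 \<le> s \<Longrightarrow> s \<le> T \<Longrightarrow> subalgebra M (FF s)"
proof -
  assume s: "0 \<le> s" "s \<le> T"
  have "sets (FF s) \<subseteq> sets M"
    unfolding sets_past space_eq[symmetric]
    by (rule sets.sigma_sets_subset) (rule past_gen_sub[OF s, unfolded space_eq[symmetric]])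
  then show ?thesis unfolding subalgebra_def by (simp add: space_past space_eq)
qed

lemma sets_pres: "s \<in> {0..T} \<Longrightarrow> sets (GG s) = {(\<lambda>\<omega>. \<omega> s) -` B \<inter> space (path_space T) | B. B \<in> sets (borel::'a measure)}"
  unfolding present_alg_def by (rule sets_vimage_algebra2) auto

lemma space_pres: "space (GG s) = space (path_space T)"
  unfolding present_alg_def by simp

lemma sub_pres: "s \<in> {0..T} \<Longrightarrow> subalgebra M (GG s)"
  unfolding subalgebra_def
proof (intro conjI)
  assume s: "s \<in> {0..T}"
  show "space (GG s) = space M" by (simp add: space_eq space_pres)
  show "sets (GG s) \<subseteq> sets M"
  proof
    fix A assume "A \<in> sets (GG s)"
    then obtain B where "B \<in> sets (borel::'a measure)" "A = (\<lambda>\<omega>. \<omega> s) -` B \<inter> space (path_space T)"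
      using sets_pres[OF s] by auto
    then show "A \<in> sets M" using measurable_sets[OF meas_Z[OF s]] by (simp add: space_eq)
  qed
qed

lemma sub_past_past: "0 \<le> s \<Longrightarrow> s \<le> t \<Longrightarrow> subalgebra (FF t) (FF s)"
  unfolding subalgebra_def
proof (intro conjI)
  assume "0 \<le> s" "s \<le> t"
  show "space (FF s) = space (FF t)" by (simp add: space_past)
  show "sets (FF s) \<subseteq> sets (FF t)"
    unfolding sets_past[of s] sets_past[of t]
  proof (intro sigma_sets_mono' subsetI)
    fix X assume "X \<in> {(\<lambda>\<omega>. \<omega> r) -` B \<inter> space (path_space T) | r B. r \<in> {0..s} \<and> B \<in> sets (borel :: 'a measure)}"
    then obtain r B where "X = (\<lambda>\<omega>. \<omega> r) -` B \<inter> space (path_space T)" "r \<in> {0..s}" "B \<in> sets (borel :: 'a measure)"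
      by blast
    then show "X \<in> {(\<lambda>\<omega>. \<omega> r) -` B \<inter> space (path_space T) | r B. r \<in> {0..t} \<and> B \<in> sets (borel :: 'a measure)}"
      using \<open>s \<le> t\<close> by (intro CollectI exI[of _ r] exI[of _ B]) auto
  qed
qed

lemma sub_past_pres: "0 \<le> s \<Longrightarrow> s \<le> T \<Longrightarrow> subalgebra (FF s) (GG s)"
  unfolding subalgebra_def
proof (intro conjI)
  assume s: "0 \<le> s" "s \<le> T"
  show "space (GG s) = space (FF s)" by (simp add: space_past space_pres)
  show "sets (GG s) \<subseteq> sets (FF s)"
  proof
    fix A assume "A \<in> sets (GG s)"
    then obtain B where "B \<in> sets (borel::'a measure)" "A = (\<lambda>\<omega>. \<omega> s) -` B \<inter> space (path_space T)"
      using sets_pres s by auto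
    then show "A \<in> sets (FF s)" unfolding sets_past[of s]
      using s by (intro sigma_sets.Basic) auto
  qed
qed

lemma meas_pres: "(g::'a\<Rightarrow>real) \<in> borel_measurable borel \<Longrightarrow> (\<lambda>\<omega>. g (\<omega> t)) \<in> borel_measurable (GG t)"
  unfolding present_alg_def
  by (rule measurable_compose[OF measurable_vimage_algebra1]) auto

lemma sfs_past: "0 \<le> s \<Longrightarrow> s \<le> T \<Longrightarrow> sigma_finite_subalgebra M (FF s)"
  by (intro finite_measure_subalgebra_is_sigma_finite) (simp add: finite_measure_subalgebra_def finite_measure_subalgebra_axioms_def sub_past finite_measure_axioms)

lemma sfs_pres: "0 \<le> s \<Longrightarrow> s \<le> T \<Longrightarrow> sigma_finite_subalgebra M (GG s)"
  by (intro finite_measure_subalgebra_is_sigma_finite) (simp add: finite_measure_subalgebra_def finite_measure_subalgebra_axioms_def sub_pres finite_measure_axioms)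

end

context pm begin

lemma char_markov:
  assumes s: "0 \<le> s" "s \<le> T" and X: "integrable M X"
    and Ym: "Y \<in> borel_measurable (GG s)" and Yi: "integrable M Y"
    and eq: "\<And>A. A \<in> sets (FF s) \<Longrightarrow> (\<integral>x\<in>A. X x \<partial>M) = (\<integral>x\<in>A. Y x \<partial>M)"
  shows "AE x in M. real_cond_exp M (FF s) X x = real_cond_exp M (GG s) X x"
proof -
  interpret F: sigma_finite_subalgebra M "FF s" by (rule sfs_past[OF s])
  interpret G: sigma_finite_subalgebra M "GG s" by (rule sfs_pres[OF s])
  have YF: "Y \<in> borel_measurable (FF s)" using measurable_from_subalg[OF sub_past_pres[OF s] Ym] .
  have GF: "sets (GG s) \<subseteq> sets (FF s)" using sub_past_pres[OF s] by (simp add: subalgebra_def)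
  have 1: "AE x in M. real_cond_exp M (FF s) X x = Y x"
    by (rule F.real_cond_exp_charact) (use eq X Yi YF in auto)
  have 2: "AE x in M. real_cond_exp M (GG s) X x = Y x"
    by (rule G.real_cond_exp_charact) (use eq X Yi Ym GF in auto)
  from 1 2 show ?thesis by auto
qed

lemma up_to_G:
  assumes s: "0 \<le> s" "s \<le> T" and X: "integrable M X"
    and Wm: "W \<in> borel_measurable (GG s)" and Wi: "integrable M W"
    and ae: "AE x in M. real_cond_exp M (FF s) X x = W x"
  shows "AE x in M. real_cond_exp M (GG s) X x = W x"
proof -
  interpret F: sigma_finite_subalgebra M "FF s" by (rule sfs_past[OF s])
  interpret G: sigma_finite_subalgebra M "GG s" by (rule sfs_pres[OF s])
  have GF: "sets (GG s) \<subseteq> sets (FF s)" using sub_past_pres[OF s] by (simp add: subalgebra_def)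
  have Xm: "X \<in> borel_measurable M" using X by auto
  show ?thesis
  proof (rule G.real_cond_exp_charact[OF _ X Wi Wm])
    fix A assume A: "A \<in> sets (GG s)"
    then have AF: "A \<in> sets (FF s)" using GF by auto
    then have AM: "A \<in> sets M" using sub_past[OF s] by (auto simp: subalgebra_def)
    have "(\<integral>x\<in>A. X x \<partial>M) = (\<integral>x\<in>A. real_cond_exp M (FF s) X x \<partial>M)"
      by (rule F.real_cond_exp_intA[OF X AF])
    also have "\<dots> = (\<integral>x\<in>A. W x \<partial>M)"
      by (rule set_lebesgue_integral_cong_AE) (use AM ae Wi in auto)
    finally show "(\<integral>x\<in>A. X x \<partial>M) = (\<integral>x\<in>A. W x \<partial>M)" .
  qed
qed

end

context pm begin

lemma GM_pos:
  assumes mk: "markov_path T M" and st: "0 \<le> s" "s \<le> t" "t \<le> T"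
    and g: "g \<in> borel_measurable borel" "\<And>x. 0 \<le> g x"
    and gi: "integrable M (\<lambda>\<omega>. g (\<omega> t))"
  shows "AE x in M. real_cond_exp M (FF s) (\<lambda>\<omega>. g (\<omega> t)) x = real_cond_exp M (GG s) (\<lambda>\<omega>. g (\<omega> t)) x"
proof -
  have s: "0 \<le> s" "s \<le> T" using st by auto
  interpret F: sigma_finite_subalgebra M "FF s" by (rule sfs_past[OF s])
  interpret G: sigma_finite_subalgebra M "GG s" by (rule sfs_pres[OF s])
  let ?cF = "real_cond_exp M (FF s)"
  let ?cG = "real_cond_exp M (GG s)"
  have Zt: "(\<lambda>\<omega>. \<omega> t) \<in> measurable M borel" using meas_Z st by auto
  define X where "X = (\<lambda>\<omega>. g (\<omega> t))"
  define Xn where "Xn = (\<lambda>(n::nat) \<omega>. min (g (\<omega> t)) (real n))"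
  have Xm[measurable]: "X \<in> borel_measurable M" unfolding X_def by (rule measurable_compose[OF Zt g(1)])
  have Xnm[measurable]: "\<And>n. Xn n \<in> borel_measurable M"
    unfolding Xn_def using Xm[unfolded X_def] by measurable
  have Xi: "integrable M X" using gi unfolding X_def .
  have Xn_le: "\<And>n x. norm (Xn n x) \<le> X x" unfolding Xn_def X_def using g(2) by auto
  have Xni: "\<And>n. integrable M (Xn n)"
    by (rule Bochner_Integration.integrable_bound[OF Xi]) (use Xn_le g(2) in \<open>auto simp: X_def\<close>)
  have mkn: "AE x in M. ?cF (Xn n) x = ?cG (Xn n) x" for n
  proof -
    have "bounded (range (\<lambda>x. min (g x) (real n)))"
      unfolding bounded_iff using g(2) by (intro exI[of _ "real n"]) auto
    moreover have "(\<lambda>x. min (g x) (real n)) \<in> borel_measurable borel" using g(1) by measurable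
    ultimately show ?thesis using mk st unfolding markov_path_def Xn_def by blast
  qed
  define e where "e n = (\<integral>x. X x \<partial>M) - (\<integral>x. Xn n x \<partial>M)" for n
  have bound: "(\<integral>x. \<bar>?cF X x - ?cG X x\<bar> \<partial>M) \<le> 2 * e n" for n
  proof -
    have le: "AE x in M. Xn n x \<le> X x" using Xn_le[of n] by (intro AE_I2) (auto simp: abs_le_iff)
    have a1: "AE x in M. ?cF (Xn n) x \<le> ?cF X x" by (rule F.real_cond_exp_mono[OF le Xni Xi])
    have a2: "AE x in M. ?cG (Xn n) x \<le> ?cG X x" by (rule G.real_cond_exp_mono[OF le Xni Xi])
    have ae: "AE x in M. \<bar>?cF X x - ?cG X x\<bar> \<le> (?cF X x - ?cF (Xn n) x) + (?cG X x - ?cG (Xn n) x)"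
      using a1 a2 mkn[of n] by auto
    have "(\<integral>x. \<bar>?cF X x - ?cG X x\<bar> \<partial>M) \<le> (\<integral>x. (?cF X x - ?cF (Xn n) x) + (?cG X x - ?cG (Xn n) x) \<partial>M)"
      by (rule integral_mono_AE[OF _ _ ae])
        (auto intro!: F.real_cond_exp_int G.real_cond_exp_int Xi Xni)
    also have "\<dots> = 2 * e n"
      using F.real_cond_exp_int[OF Xi] G.real_cond_exp_int[OF Xi]
        F.real_cond_exp_int[OF Xni[of n]] G.real_cond_exp_int[OF Xni[of n]]
      by (simp add: e_def)
    finally show ?thesis .
  qed
  have "(\<lambda>n. \<integral>x. Xn n x \<partial>M) \<longlonglongrightarrow> (\<integral>x. X x \<partial>M)"
  proof (rule integral_dominated_convergence[where w = X])
    show "AE x in M. (\<lambda>n. Xn n x) \<longlonglongrightarrow> X x"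
    proof (intro AE_I2)
      fix x
      obtain N :: nat where N: "g (x t) \<le> real N" using real_arch_simple by blast
      have "eventually (\<lambda>n. Xn n x = X x) sequentially"
        unfolding eventually_sequentially Xn_def X_def
        using N by (intro exI[of _ N]) auto
      then show "(\<lambda>n. Xn n x) \<longlonglongrightarrow> X x" by (rule tendsto_eventually)
    qed
    show "\<And>n. AE x in M. norm (Xn n x) \<le> X x" using Xn_le by auto
  qed (use Xi in auto)
  then have "(\<lambda>n. e n) \<longlonglongrightarrow> (\<integral>x. X x \<partial>M) - (\<integral>x. X x \<partial>M)"
    unfolding e_def by (intro tendsto_diff tendsto_const)
  then have "(\<lambda>n. 2 * e n) \<longlonglongrightarrow> 2 * 0" by (intro tendsto_mult tendsto_const) simp
  then have "(\<integral>x. \<bar>?cF X x - ?cG X x\<bar> \<partial>M) \<le> 2 * 0"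
    by (rule LIMSEQ_le_const) (use bound in auto)
  moreover have "0 \<le> (\<integral>x. \<bar>?cF X x - ?cG X x\<bar> \<partial>M)" by (rule integral_nonneg_AE) auto
  ultimately have "(\<integral>x. \<bar>?cF X x - ?cG X x\<bar> \<partial>M) = 0" by simp
  then have "AE x in M. \<bar>?cF X x - ?cG X x\<bar> = 0"
    by (subst (asm) integral_nonneg_eq_0_iff_AE)
      (auto intro!: F.real_cond_exp_int G.real_cond_exp_int Xi)
  then show ?thesis unfolding X_def by auto
qed

end

lemma doob_dynkin_real:
  fixes Z :: "'b \<Rightarrow> 'c" and W :: "'b \<Rightarrow> real"
  assumes W: "W \<in> borel_measurable (vimage_algebra X Z N)" and Z: "Z \<in> X \<rightarrow> space N"
  shows "\<exists>\<phi> \<in> borel_measurable N. \<forall>x\<in>X. W x = \<phi> (Z x)"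
proof -
  have "\<exists>B. B \<in> sets N \<and> {x\<in>X. W x < q} = Z -` B \<inter> X" for q :: real
  proof -
    have "W -` {..<q} \<inter> space (vimage_algebra X Z N) \<in> sets (vimage_algebra X Z N)"
      by (rule measurable_sets[OF W]) auto
    moreover have "W -` {..<q} \<inter> space (vimage_algebra X Z N) = {x\<in>X. W x < q}" by auto
    ultimately have "{x\<in>X. W x < q} \<in> sets (vimage_algebra X Z N)" by simp
    then show ?thesis by (simp add: sets_vimage_algebra2[OF Z]) blast
  qed
  then obtain B where B: "\<And>q. B q \<in> sets N" "\<And>q. {x\<in>X. W x < q} = Z -` B q \<inter> X" by metis
  define \<phi> where "\<phi> y = real_of_ereal (INF q\<in>\<rat>. if y \<in> B q then ereal q else \<infinity>)" for y
  have "(\<lambda>y. INF q\<in>\<rat>. if y \<in> B q then ereal q else \<infinity>) \<in> borel_measurable N"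
  proof (rule borel_measurable_INF[OF countable_rat])
    fix q :: real
    show "(\<lambda>y. if y \<in> B q then ereal q else \<infinity>) \<in> borel_measurable N"
      by (rule measurable_If_set) (use B(1)[of q] in auto)
  qed
  then have "\<phi> \<in> borel_measurable N" unfolding \<phi>_def by (rule borel_measurable_real_of_ereal)
  moreover have "W x = \<phi> (Z x)" if x: "x \<in> X" for x
  proof -
    have mem: "Z x \<in> B q \<longleftrightarrow> W x < q" for q using B(2)[of q] x by blast
    have "(INF q\<in>\<rat>. if Z x \<in> B q then ereal q else \<infinity>) = ereal (W x)"
    proof (rule antisym)
      show "ereal (W x) \<le> (INF q\<in>\<rat>. if Z x \<in> B q then ereal q else \<infinity>)"
        by (rule INF_greatest) (auto simp: mem)
      show "(INF q\<in>\<rat>. if Z x \<in> B q then ereal q else \<infinity>) \<le> ereal (W x)"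
      proof (rule dense_ge)
        fix e assume e: "ereal (W x) < e"
        then obtain r where r: "ereal (W x) < ereal r" "ereal r < e" using ereal_dense2 by blast
        then obtain q where q: "q \<in> \<rat>" "W x < q" "q < r" using Rats_dense_in_real[of "W x" r] by auto
        have "(INF q\<in>\<rat>. if Z x \<in> B q then ereal q else \<infinity>) \<le> (if Z x \<in> B q then ereal q else \<infinity>)"
          by (rule INF_lower) (rule q(1))
        also have "\<dots> = ereal q" using mem[of q] q by simp
        also have "\<dots> \<le> e" using q r by (metis ereal_less_eq(3) less_imp_le order.strict_trans1)
        finally show "(INF q\<in>\<rat>. if Z x \<in> B q then ereal q else \<infinity>) \<le> e" .
      qed
    qed
    then show ?thesis by (simp add: \<phi>_def)
  qed
  ultimately show ?thesis by blast
qed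

context pm begin

lemma GM:
  assumes mk: "markov_path T M" and st: "0 \<le> s" "s \<le> t" "t \<le> T"
    and g: "g \<in> borel_measurable borel"
    and gi: "integrable M (\<lambda>\<omega>. g (\<omega> t))"
  shows "AE x in M. real_cond_exp M (FF s) (\<lambda>\<omega>. g (\<omega> t)) x = real_cond_exp M (GG s) (\<lambda>\<omega>. g (\<omega> t)) x"
proof -
  have s: "0 \<le> s" "s \<le> T" using st by auto
  interpret F: sigma_finite_subalgebra M "FF s" by (rule sfs_past[OF s])
  interpret G: sigma_finite_subalgebra M "GG s" by (rule sfs_pres[OF s])
  define gp where "gp x = max (g x) 0" for x
  define gm where "gm x = max (- g x) 0" for x
  have eq: "(\<lambda>\<omega>. g (\<omega> t)) = (\<lambda>\<omega>. gp (\<omega> t) - gm (\<omega> t))" by (auto simp: gp_def gm_def fun_eq_iff max_def)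
  have gpm: "gp \<in> borel_measurable borel" "gm \<in> borel_measurable borel" unfolding gp_def gm_def using g by measurable
  have gpi: "integrable M (\<lambda>\<omega>. gp (\<omega> t))" unfolding gp_def by (intro Bochner_Integration.integrable_max gi) simp
  have gmi: "integrable M (\<lambda>\<omega>. gm (\<omega> t))" unfolding gm_def by (intro Bochner_Integration.integrable_max integrable_minus gi) simp
  have p: "AE x in M. real_cond_exp M (FF s) (\<lambda>\<omega>. gp (\<omega> t)) x = real_cond_exp M (GG s) (\<lambda>\<omega>. gp (\<omega> t)) x"
    by (rule GM_pos[OF mk st gpm(1) _ gpi]) (simp add: gp_def)
  have m: "AE x in M. real_cond_exp M (FF s) (\<lambda>\<omega>. gm (\<omega> t)) x = real_cond_exp M (GG s) (\<lambda>\<omega>. gm (\<omega> t)) x"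
    by (rule GM_pos[OF mk st gpm(2) _ gmi]) (simp add: gm_def)
  have d1: "AE x in M. real_cond_exp M (FF s) (\<lambda>\<omega>. gp (\<omega> t) - gm (\<omega> t)) x = real_cond_exp M (FF s) (\<lambda>\<omega>. gp (\<omega> t)) x - real_cond_exp M (FF s) (\<lambda>\<omega>. gm (\<omega> t)) x"
    by (rule F.real_cond_exp_diff[OF gpi gmi])
  have d2: "AE x in M. real_cond_exp M (GG s) (\<lambda>\<omega>. gp (\<omega> t) - gm (\<omega> t)) x = real_cond_exp M (GG s) (\<lambda>\<omega>. gp (\<omega> t)) x - real_cond_exp M (GG s) (\<lambda>\<omega>. gm (\<omega> t)) x"
    by (rule G.real_cond_exp_diff[OF gpi gmi])
  show ?thesis unfolding eq using p m d1 d2 by auto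
qed

lemma multi:
  assumes mk: "markov_path T M" and st: "0 \<le> s" "s \<le> t" "t \<le> T"
    and f: "f \<in> borel_measurable borel" "\<And>x. \<bar>f x\<bar> \<le> C"
    and h: "h \<in> borel_measurable borel" "\<And>x. 0 \<le> h x"
    and hi: "integrable M (\<lambda>\<omega>. h (\<omega> T))"
  shows "AE x in M. real_cond_exp M (FF s) (\<lambda>\<omega>. f (\<omega> t) * h (\<omega> T)) x
                  = real_cond_exp M (GG s) (\<lambda>\<omega>. f (\<omega> t) * h (\<omega> T)) x"
proof -
  have s: "0 \<le> s" "s \<le> T" and t: "0 \<le> t" "t \<le> T" using st by auto
  interpret F: sigma_finite_subalgebra M "FF s" by (rule sfs_past[OF s])
  interpret G: sigma_finite_subalgebra M "GG s" by (rule sfs_pres[OF s])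
  interpret Ft: sigma_finite_subalgebra M "FF t" by (rule sfs_past[OF t])
  interpret Gt: sigma_finite_subalgebra M "GG t" by (rule sfs_pres[OF t])
  have Zt: "(\<lambda>\<omega>. \<omega> t) \<in> measurable M borel" and ZT: "(\<lambda>\<omega>. \<omega> T) \<in> measurable M borel"
    using meas_Z st by auto
  define X where "X = (\<lambda>\<omega>. f (\<omega> t))"
  define D where "D = (\<lambda>\<omega>. h (\<omega> T))"
  have Xm[measurable]: "X \<in> borel_measurable M" unfolding X_def by (rule measurable_compose[OF Zt f(1)])
  have Dm[measurable]: "D \<in> borel_measurable M" unfolding D_def by (rule measurable_compose[OF ZT h(1)])
  have Di: "integrable M D" using hi unfolding D_def .
  have C: "0 \<le> C" using f(2)[of undefined] by auto
  have XDi: "integrable M (\<lambda>\<omega>. X \<omega> * D \<omega>)"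
  proof (rule Bochner_Integration.integrable_bound[OF integrable_mult_right[OF Di, of C]])
    show "AE x in M. norm (X x * D x) \<le> norm (C * D x)"
      by (intro AE_I2) (simp add: X_def D_def abs_mult h(2) C mult_right_mono f(2))
  qed simp
  have E_eq: "AE x in M. real_cond_exp M (FF t) D x = real_cond_exp M (GG t) D x"
    using GM[OF mk t order_refl h(1) hi] unfolding D_def .
  have Em: "real_cond_exp M (GG t) D \<in> borel_measurable (vimage_algebra (space (path_space T)) (\<lambda>\<omega>. \<omega> t) borel)"
    using borel_measurable_cond_exp[of M "GG t" D] unfolding present_alg_def .
  obtain \<phi> where \<phi>: "\<phi> \<in> borel_measurable borel" "\<forall>\<omega>\<in>space (path_space T). real_cond_exp M (GG t) D \<omega> = \<phi> (\<omega> t)"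
    using doob_dynkin_real[OF Em] by auto
  define \<psi> where "\<psi> x = f x * \<phi> x" for x
  have \<psi>m: "\<psi> \<in> borel_measurable borel" unfolding \<psi>_def using f(1) \<phi>(1) by measurable
  have Ei: "integrable M (real_cond_exp M (GG t) D)" by (rule Gt.real_cond_exp_int(1)[OF Di])
  have \<psi>eq: "\<And>\<omega>. \<omega> \<in> space M \<Longrightarrow> \<psi> (\<omega> t) = X \<omega> * real_cond_exp M (GG t) D \<omega>"
    using \<phi>(2) space_eq by (simp add: \<psi>_def X_def)
  have XEi: "integrable M (\<lambda>\<omega>. X \<omega> * real_cond_exp M (GG t) D \<omega>)"
  proof (rule Bochner_Integration.integrable_bound[OF integrable_mult_right[OF Ei, of C]])
    show "AE x in M. norm (X x * real_cond_exp M (GG t) D x) \<le> norm (C * real_cond_exp M (GG t) D x)"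
      by (intro AE_I2) (simp add: X_def abs_mult C mult_right_mono f(2))
  qed simp
  have \<psi>i: "integrable M (\<lambda>\<omega>. \<psi> (\<omega> t))"
    using XEi by (subst Bochner_Integration.integrable_cong[OF refl \<psi>eq]) auto
  have GM\<psi>: "AE x in M. real_cond_exp M (FF s) (\<lambda>\<omega>. \<psi> (\<omega> t)) x = real_cond_exp M (GG s) (\<lambda>\<omega>. \<psi> (\<omega> t)) x"
    by (rule GM[OF mk st \<psi>m \<psi>i])
  have XFt: "X \<in> borel_measurable (FF t)"
    unfolding X_def by (rule measurable_from_subalg[OF sub_past_pres[OF t] meas_pres[OF f(1)]])
  have 1: "AE x in M. real_cond_exp M (FF t) (\<lambda>\<omega>. X \<omega> * D \<omega>) x = X x * real_cond_exp M (FF t) D x"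
    by (rule Ft.real_cond_exp_mult[OF XFt Dm XDi])
  have 2: "AE x in M. real_cond_exp M (FF t) (\<lambda>\<omega>. X \<omega> * D \<omega>) x = \<psi> (x t)"
    using 1 E_eq AE_space by eventually_elim (simp add: \<psi>eq)
  have \<psi>Zm: "(\<lambda>\<omega>. \<psi> (\<omega> t)) \<in> borel_measurable M" by (rule measurable_compose[OF Zt \<psi>m])
  have 3: "AE x in M. real_cond_exp M (FF s) (real_cond_exp M (FF t) (\<lambda>\<omega>. X \<omega> * D \<omega>)) x
              = real_cond_exp M (FF s) (\<lambda>\<omega>. X \<omega> * D \<omega>) x"
    by (rule F.real_cond_exp_nested_subalg[OF sub_past[OF t] sub_past_past[OF st(1,2)] XDi])
  have 4: "AE x in M. real_cond_exp M (FF s) (real_cond_exp M (FF t) (\<lambda>\<omega>. X \<omega> * D \<omega>)) x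
              = real_cond_exp M (FF s) (\<lambda>\<omega>. \<psi> (\<omega> t)) x"
    by (rule F.real_cond_exp_cong[OF 2 borel_measurable_cond_exp2 \<psi>Zm])
  have 5: "AE x in M. real_cond_exp M (FF s) (\<lambda>\<omega>. X \<omega> * D \<omega>) x = real_cond_exp M (GG s) (\<lambda>\<omega>. \<psi> (\<omega> t)) x"
    using 3 4 GM\<psi> by auto
  have 6: "AE x in M. real_cond_exp M (GG s) (\<lambda>\<omega>. X \<omega> * D \<omega>) x = real_cond_exp M (GG s) (\<lambda>\<omega>. \<psi> (\<omega> t)) x"
    by (rule up_to_G[OF s XDi borel_measurable_cond_exp G.real_cond_exp_int(1)[OF \<psi>i] 5])
  show ?thesis using 5 6 unfolding X_def D_def by auto
qed

end

context pm begin

lemma pm_density: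
  assumes h: "h \<in> borel_measurable borel" "\<And>z. 0 \<le> h z" and hi: "integrable M (\<lambda>\<omega>. h (\<omega> T))"
    and T: "0 \<le> T"
  shows "pm (density M (\<lambda>\<omega>. ennreal (h (\<omega> T)))) T"
proof -
  have ZT: "(\<lambda>\<omega>. \<omega> T) \<in> measurable M borel" using meas_Z T by auto
  have Dm[measurable]: "(\<lambda>\<omega>. h (\<omega> T)) \<in> borel_measurable M" by (rule measurable_compose[OF ZT h(1)])
  have "emeasure (density M (\<lambda>\<omega>. ennreal (h (\<omega> T)))) (space M) = (\<integral>\<^sup>+\<omega>. ennreal (h (\<omega> T)) \<partial>M)"
    by (subst emeasure_density) (auto intro!: nn_integral_cong)
  also have "\<dots> \<noteq> \<infinity>" using integrableD(2)[OF hi] .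
  finally have "finite_measure (density M (\<lambda>\<omega>. ennreal (h (\<omega> T))))"
    by (intro finite_measureI) simp
  then show ?thesis unfolding pm_def pm_axioms_def using sets_eq by simp
qed

lemma dens_markov:
  assumes mk: "markov_path T M" and T: "0 \<le> T"
    and h: "h \<in> borel_measurable borel" "\<And>z. 0 < h z" and hi: "integrable M (\<lambda>\<omega>. h (\<omega> T))"
  shows "markov_path T (density M (\<lambda>\<omega>. ennreal (h (\<omega> T))))"
proof -
  have h0: "\<And>z. 0 \<le> h z" using h(2) less_imp_le by blast
  define D where "D = (\<lambda>\<omega>. h (\<omega> T))"
  define M' where "M' = density M (\<lambda>\<omega>. ennreal (D \<omega>))"
  have ZT: "(\<lambda>\<omega>. \<omega> T) \<in> measurable M borel" using meas_Z T by auto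
  have Dm[measurable]: "D \<in> borel_measurable M" unfolding D_def by (rule measurable_compose[OF ZT h(1)])
  have Di: "integrable M D" using hi unfolding D_def .
  have D_pos: "\<And>\<omega>. 0 < D \<omega>" unfolding D_def using h(2) by simp
  interpret M': pm M' T unfolding M'_def D_def by (rule pm_density[OF h(1) h0 hi T])
  have eqM: "density M (\<lambda>\<omega>. ennreal (h (\<omega> T))) = M'" by (simp add: M'_def D_def)
  show ?thesis unfolding eqM markov_path_def
  proof (intro allI impI)
    fix s t and f :: "'a \<Rightarrow> real"
    assume st: "0 \<le> s" "s \<le> t" "t \<le> T" and fm: "f \<in> borel_measurable borel" and fb: "bounded (range f)"
    obtain C where C: "\<And>x. \<bar>f x\<bar> \<le> C" using fb unfolding bounded_iff by auto
    have C0: "0 \<le> C" using C[of undefined] by auto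
    have s: "0 \<le> s" "s \<le> T" using st by auto
    interpret F: sigma_finite_subalgebra M "FF s" by (rule sfs_past[OF s])
    interpret G: sigma_finite_subalgebra M "GG s" by (rule sfs_pres[OF s])
    have Zt: "(\<lambda>\<omega>. \<omega> t) \<in> measurable M borel" using meas_Z st by auto
    define X where "X = (\<lambda>\<omega>. f (\<omega> t))"
    have Xm[measurable]: "X \<in> borel_measurable M" unfolding X_def by (rule measurable_compose[OF Zt fm])
    have XDi: "integrable M (\<lambda>\<omega>. X \<omega> * D \<omega>)"
    proof (rule Bochner_Integration.integrable_bound[OF integrable_mult_right[OF Di, of C]])
      show "AE x in M. norm (X x * D x) \<le> norm (C * D x)"
        by (intro AE_I2) (simp add: X_def D_def abs_mult h0 C0 mult_right_mono C)
    qed simp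
    define a where "a = real_cond_exp M (GG s) D"
    define b where "b = real_cond_exp M (GG s) (\<lambda>\<omega>. X \<omega> * D \<omega>)"
    define Y where "Y = (\<lambda>\<omega>. max (-C) (min C (b \<omega> / a \<omega>)))"
    have a_pos: "AE \<omega> in M. 0 < a \<omega>" unfolding a_def
      by (rule G.real_cond_exp_gr_c[OF Di]) (use D_pos in auto)
    have aF: "AE \<omega> in M. real_cond_exp M (FF s) D \<omega> = a \<omega>"
      unfolding a_def D_def using GM[OF mk s(1) s(2) order_refl h(1) hi] .
    have bF: "AE \<omega> in M. real_cond_exp M (FF s) (\<lambda>\<omega>. X \<omega> * D \<omega>) \<omega> = b \<omega>"
      unfolding b_def X_def D_def using multi[OF mk st fm C h(1) h0 hi] .
    have CDi: "integrable M (\<lambda>\<omega>. C * D \<omega>)" using Di by simp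
    have mCDi: "integrable M (\<lambda>\<omega>. (-C) * D \<omega>)" using Di by simp
    have b1: "AE \<omega> in M. b \<omega> \<le> C * a \<omega>"
    proof -
      have "AE \<omega> in M. b \<omega> \<le> real_cond_exp M (GG s) (\<lambda>\<omega>. C * D \<omega>) \<omega>"
        unfolding b_def
        by (rule G.real_cond_exp_mono[OF _ XDi CDi])
          (intro AE_I2, simp add: X_def D_def h0 mult_right_mono C[THEN abs_le_D1])
      then show ?thesis using G.real_cond_exp_cmult[OF Di, of C] unfolding a_def by auto
    qed
    have b2: "AE \<omega> in M. (-C) * a \<omega> \<le> b \<omega>"
    proof -
      have "AE \<omega> in M. real_cond_exp M (GG s) (\<lambda>\<omega>. (-C) * D \<omega>) \<omega> \<le> b \<omega>"
        unfolding b_def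
      proof (rule G.real_cond_exp_mono[OF _ mCDi XDi], intro AE_I2)
        fix x
        have "- C \<le> f (x t)" using C[of "x t"] by auto
        then have "- C * h (x T) \<le> f (x t) * h (x T)" using h0[of "x T"] by (rule mult_right_mono)
        then show "- C * D x \<le> X x * D x" unfolding X_def D_def by simp
      qed
      then show ?thesis using G.real_cond_exp_cmult[OF Di, of "-C"] unfolding a_def by auto
    qed
    have Yeq: "AE \<omega> in M. Y \<omega> * a \<omega> = b \<omega>"
      using a_pos b1 b2
    proof eventually_elim
      case (elim \<omega>)
      have "b \<omega> / a \<omega> \<le> C" using elim by (simp add: pos_divide_le_eq)
      moreover have "- C \<le> b \<omega> / a \<omega>" using elim by (simp add: pos_le_divide_eq)
      ultimately have "Y \<omega> = b \<omega> / a \<omega>" unfolding Y_def by simp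
      then show ?case using elim by simp
    qed
    have YG: "Y \<in> borel_measurable (GG s)" unfolding Y_def a_def b_def by measurable
    have YF: "Y \<in> borel_measurable (FF s)" by (rule measurable_from_subalg[OF sub_past_pres[OF s] YG])
    have YM[measurable]: "Y \<in> borel_measurable M" by (rule measurable_from_subalg[OF sub_past[OF s] YF])
    have Ybd: "\<And>\<omega>. \<bar>Y \<omega>\<bar> \<le> C" unfolding Y_def using C0 by auto
    have DYi: "integrable M (\<lambda>\<omega>. D \<omega> * Y \<omega>)"
    proof (rule Bochner_Integration.integrable_bound[OF integrable_mult_right[OF Di, of C]])
      show "AE x in M. norm (D x * Y x) \<le> norm (C * D x)"
      proof (intro AE_I2)
        fix x
        have "\<bar>Y x\<bar> * h (x T) \<le> C * h (x T)" using Ybd h0 by (rule mult_right_mono)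
        then show "norm (D x * Y x) \<le> norm (C * D x)" using h0[of "x T"] C0
          by (simp add: D_def abs_mult mult.commute)
      qed
    qed simp
    have Y'i: "integrable M' Y" unfolding M'_def
      by (subst integrable_density) (use DYi D_pos less_imp_le in auto)
    have X'i: "integrable M' X" unfolding M'_def
      by (subst integrable_density) (use XDi D_pos less_imp_le in \<open>auto simp: mult.commute\<close>)
    have "AE x in M'. real_cond_exp M' (FF s) X x = real_cond_exp M' (GG s) X x"
    proof (rule M'.char_markov[OF s X'i YG Y'i])
      fix A assume A: "A \<in> sets (FF s)"
      then have AM[measurable]: "A \<in> sets M" using sub_past[OF s] by (auto simp: subalgebra_def)
      have AF: "indicator A \<in> borel_measurable (FF s)" using A by simp
      have "(\<integral>x\<in>A. X x \<partial>M') = (\<integral>x. indicator A x * (X x * D x) \<partial>M)"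
        unfolding set_lebesgue_integral_def M'_def
        by (subst integral_density) (use D_pos less_imp_le in \<open>auto simp: ac_simps\<close>)
      also have "\<dots> = (\<integral>x. indicator A x * real_cond_exp M (FF s) (\<lambda>\<omega>. X \<omega> * D \<omega>) x \<partial>M)"
        by (rule F.real_cond_exp_intg(2)[symmetric])
          (use integrable_mult_indicator[OF AM XDi] AF in auto)
      also have "\<dots> = (\<integral>x. indicator A x * b x \<partial>M)"
        by (rule integral_cong_AE) (use bF in \<open>auto simp: b_def\<close>)
      finally have L: "(\<integral>x\<in>A. X x \<partial>M') = (\<integral>x. indicator A x * b x \<partial>M)" .
      have "(\<integral>x\<in>A. Y x \<partial>M') = (\<integral>x. (indicator A x * Y x) * D x \<partial>M)"
        unfolding set_lebesgue_integral_def M'_def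
        by (subst integral_density) (use D_pos less_imp_le in \<open>auto simp: ac_simps\<close>)
      also have "\<dots> = (\<integral>x. (indicator A x * Y x) * real_cond_exp M (FF s) D x \<partial>M)"
      proof (rule F.real_cond_exp_intg(2)[symmetric])
        show "integrable M (\<lambda>x. indicator A x * Y x * D x)"
          using integrable_mult_indicator[OF AM DYi] by (simp add: ac_simps)
        show "(\<lambda>x. indicator A x * Y x) \<in> borel_measurable (FF s)" using A YF by measurable
      qed simp
      also have "\<dots> = (\<integral>x. indicator A x * b x \<partial>M)"
      proof (rule integral_cong_AE)
        show "AE x in M. indicator A x * Y x * real_cond_exp M (FF s) D x = indicator A x * b x"
          using aF Yeq by eventually_elim simp
      qed (auto simp: b_def)
      finally show "(\<integral>x\<in>A. X x \<partial>M') = (\<integral>x\<in>A. Y x \<partial>M')" using L by simp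
    qed
    then show "AE \<omega> in M'. real_cond_exp M' (past_alg T s) (\<lambda>\<omega>. f (\<omega> t)) \<omega>
                 = real_cond_exp M' (present_alg T s) (\<lambda>\<omega>. f (\<omega> t)) \<omega>"
      unfolding X_def .
  qed
qed

end

lemma kernel_nn_integral:
  fixes Q :: "(real \<Rightarrow> 'a::euclidean_space) measure"
  assumes T: "0 \<le> T" and Qp: "prob_space Q" and sQ: "sets Q = sets (path_space T)"
    and K: "cond_on_terminal T Q K"
    and A: "A \<in> sets (path_space T)"
    and g: "g \<in> borel_measurable borel"
  shows "(\<integral>\<^sup>+\<omega>. g (\<omega> T) * indicator A \<omega> \<partial>Q) = (\<integral>\<^sup>+x. emeasure (K x) A * g x \<partial>terminal_law T Q)"
proof -
  interpret Qp: prob_space Q by (rule Qp)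
  interpret Q: pm Q T by (simp add: pm_def pm_axioms_def sQ Qp.finite_measure_axioms)
  have ZT[measurable]: "(\<lambda>\<omega>. \<omega> T) \<in> measurable Q borel" using Q.meas_Z T by auto
  have Km: "K \<in> borel \<rightarrow>\<^sub>M prob_algebra (path_space T)"
    and Keq: "\<And>B. B \<in> sets borel \<Longrightarrow> emeasure Q (A \<inter> {\<omega> \<in> space Q. \<omega> T \<in> B})
          = (\<integral>\<^sup>+ x \<in> B. emeasure (K x) A \<partial>terminal_law T Q)"
    using K A unfolding cond_on_terminal_def by auto
  have kAm: "(\<lambda>x. emeasure (K x) A) \<in> borel_measurable borel"
    by (rule measurable_compose[OF measurable_prob_algebraD[OF Km] measurable_emeasure_subprob_algebra[OF A]])
  have kAm': "(\<lambda>x. emeasure (K x) A) \<in> borel_measurable (terminal_law T Q)"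
    using kAm by (simp add: terminal_law_def)
  have AQ[measurable]: "A \<in> sets Q" using A sQ by simp
  have ZT': "(\<lambda>\<omega>. \<omega> T) \<in> measurable (density Q (indicator A)) borel"
    using ZT by (simp add: measurable_cong_sets[OF sets_density refl])
  have nu: "distr (density Q (indicator A)) borel (\<lambda>\<omega>. \<omega> T) = density (terminal_law T Q) (\<lambda>x. emeasure (K x) A)"
  proof (rule measure_eqI)
    show "sets (distr (density Q (indicator A)) borel (\<lambda>\<omega>. \<omega> T)) = sets (density (terminal_law T Q) (\<lambda>x. emeasure (K x) A))"
      by (simp add: terminal_law_def)
    fix B assume "B \<in> sets (distr (density Q (indicator A)) borel (\<lambda>\<omega>. \<omega> T))"
    then have B[measurable]: "B \<in> sets borel" by simp
    have "emeasure (distr (density Q (indicator A)) borel (\<lambda>\<omega>. \<omega> T)) B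
        = emeasure (density Q (indicator A)) ((\<lambda>\<omega>. \<omega> T) -` B \<inter> space Q)"
      by (subst emeasure_distr[OF ZT' B]) simp
    also have "\<dots> = (\<integral>\<^sup>+\<omega>. indicator A \<omega> * indicator ((\<lambda>\<omega>. \<omega> T) -` B \<inter> space Q) \<omega> \<partial>Q)"
      by (rule emeasure_density) (auto intro: measurable_sets[OF ZT B])
    also have "\<dots> = (\<integral>\<^sup>+\<omega>. indicator (A \<inter> {\<omega> \<in> space Q. \<omega> T \<in> B}) \<omega> \<partial>Q)"
      by (intro nn_integral_cong) (auto simp: indicator_def)
    also have "\<dots> = emeasure Q (A \<inter> {\<omega> \<in> space Q. \<omega> T \<in> B})" by simp
    also have "\<dots> = (\<integral>\<^sup>+ x \<in> B. emeasure (K x) A \<partial>terminal_law T Q)" by (rule Keq[OF B])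
    also have "\<dots> = emeasure (density (terminal_law T Q) (\<lambda>x. emeasure (K x) A)) B"
      by (rule emeasure_density[symmetric, OF kAm']) (simp add: terminal_law_def)
    finally show "emeasure (distr (density Q (indicator A)) borel (\<lambda>\<omega>. \<omega> T)) B
        = emeasure (density (terminal_law T Q) (\<lambda>x. emeasure (K x) A)) B" .
  qed
  have "(\<integral>\<^sup>+\<omega>. g (\<omega> T) * indicator A \<omega> \<partial>Q) = (\<integral>\<^sup>+\<omega>. g (\<omega> T) \<partial>density Q (indicator A))"
    by (subst nn_integral_density) (auto simp: mult.commute intro: measurable_compose[OF ZT g])
  also have "\<dots> = (\<integral>\<^sup>+x. g x \<partial>distr (density Q (indicator A)) borel (\<lambda>\<omega>. \<omega> T))"
    by (rule nn_integral_distr[symmetric, OF ZT']) (simp add: g)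
  also have "\<dots> = (\<integral>\<^sup>+x. emeasure (K x) A * g x \<partial>terminal_law T Q)"
    unfolding nu by (rule nn_integral_density[OF kAm']) (simp add: terminal_law_def g)
  finally show ?thesis .
qed

lemma bind_eq:
  fixes Q :: "(real \<Rightarrow> 'a::euclidean_space) measure"
  assumes T: "0 \<le> T" and Qp: "prob_space Q" and sQ: "sets Q = sets (path_space T)"
    and Pi: "prob_space Pi_star"
    and pim: "pi_star \<in> borel_measurable borel"
    and PiD: "Pi_star = density (terminal_law T Q) (\<lambda>z. ennreal (pi_star z))"
    and K: "cond_on_terminal T Q K"
  shows "Pi_star \<bind> K = density Q (\<lambda>\<omega>. ennreal (pi_star (\<omega> T)))"
proof -
  interpret Qp: prob_space Q by (rule Qp)
  interpret Q: pm Q T by (simp add: pm_def pm_axioms_def sQ Qp.finite_measure_axioms)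
  have ZT[measurable]: "(\<lambda>\<omega>. \<omega> T) \<in> measurable Q borel" using Q.meas_Z T by auto
  have Km: "K \<in> borel \<rightarrow>\<^sub>M prob_algebra (path_space T)" using K unfolding cond_on_terminal_def by auto
  note pim[measurable]
  have sPi: "sets Pi_star = sets borel" by (simp add: PiD terminal_law_def)
  have PiS: "Pi_star \<in> space (prob_algebra borel)" by (simp add: space_prob_algebra sPi Pi)
  show ?thesis
  proof (rule measure_eqI)
    show "sets (Pi_star \<bind> K) = sets (density Q (\<lambda>\<omega>. ennreal (pi_star (\<omega> T))))"
      using sets_bind'[OF PiS Km] sQ by simp
    fix A assume "A \<in> sets (Pi_star \<bind> K)"
    then have A: "A \<in> sets (path_space T)" using sets_bind'[OF PiS Km] by simp
    have kAm: "(\<lambda>x. emeasure (K x) A) \<in> borel_measurable borel"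
      by (rule measurable_compose[OF measurable_prob_algebraD[OF Km] measurable_emeasure_subprob_algebra[OF A]])
    have "emeasure (Pi_star \<bind> K) A = (\<integral>\<^sup>+x. emeasure (K x) A \<partial>Pi_star)"
      by (rule emeasure_bind_prob_algebra[OF PiS Km A])
    also have "\<dots> = (\<integral>\<^sup>+x. ennreal (pi_star x) * emeasure (K x) A \<partial>terminal_law T Q)"
      unfolding PiD by (rule nn_integral_density) (auto simp: terminal_law_def pim kAm)
    also have "\<dots> = (\<integral>\<^sup>+\<omega>. ennreal (pi_star (\<omega> T)) * indicator A \<omega> \<partial>Q)"
      by (subst kernel_nn_integral[OF T Qp sQ K A]) (auto simp: pim mult.commute)
    also have "\<dots> = emeasure (density Q (\<lambda>\<omega>. ennreal (pi_star (\<omega> T)))) A"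
      by (rule emeasure_density[symmetric]) (use A sQ pim in auto)
    finally show "emeasure (Pi_star \<bind> K) A = emeasure (density Q (\<lambda>\<omega>. ennreal (pi_star (\<omega> T)))) A" .
  qed
qed

theorem proposition9:
  fixes T :: real
    and Q :: "(real \<Rightarrow> 'a::euclidean_space) measure"
    and Pi_star :: "'a measure"
    and pi_star :: "'a \<Rightarrow> real"
    and K :: "'a \<Rightarrow> (real \<Rightarrow> 'a) measure"
  assumes "0 < T"
    and "prob_space Q"
    and "sets Q = sets (path_space T)"
    and "prob_space Pi_star"
    and "pi_star \<in> borel_measurable borel"
    and "\<forall>z. 0 < pi_star z"
    and "Pi_star = density (terminal_law T Q) (\<lambda>z. ennreal (pi_star z))"
    and "cond_on_terminal T Q K"
  shows "markov_path T (Pi_star \<bind> K) \<longleftrightarrow> markov_path T Q"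
proof -
  have T: "0 \<le> T" using assms(1) by simp
  interpret Qp: prob_space Q by (rule assms(2))
  interpret Q: pm Q T by (simp add: pm_def pm_axioms_def assms(3) Qp.finite_measure_axioms)
  have ZT[measurable]: "(\<lambda>\<omega>. \<omega> T) \<in> measurable Q borel" using Q.meas_Z T by auto
  have pim[measurable]: "pi_star \<in> borel_measurable borel" by (rule assms(5))
  have pos: "\<And>z. 0 < pi_star z" using assms(6) by simp
  have pos0: "\<And>z. 0 \<le> pi_star z" using pos less_imp_le by blast
  have "(\<integral>\<^sup>+\<omega>. ennreal (pi_star (\<omega> T)) \<partial>Q) = (\<integral>\<^sup>+x. ennreal (pi_star x) \<partial>terminal_law T Q)"
    unfolding terminal_law_def by (rule nn_integral_distr[symmetric]) auto
  also have "\<dots> = (\<integral>\<^sup>+x. 1 \<partial>Pi_star)"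
    unfolding assms(7) by (subst nn_integral_density) (auto simp: terminal_law_def)
  also have "\<dots> = 1" using prob_space.emeasure_space_1[OF assms(4)] by simp
  finally have nnD: "(\<integral>\<^sup>+\<omega>. ennreal (pi_star (\<omega> T)) \<partial>Q) = 1" .
  have Di: "integrable Q (\<lambda>\<omega>. pi_star (\<omega> T))"
    by (rule integrableI_nonneg) (auto simp: nnD pos0)
  have beq: "Pi_star \<bind> K = density Q (\<lambda>\<omega>. ennreal (pi_star (\<omega> T)))"
    by (rule bind_eq[OF T assms(2,3,4,5,7,8)])
  show ?thesis
  proof
    assume mk': "markov_path T (Pi_star \<bind> K)"
    define M' where "M' = density Q (\<lambda>\<omega>. ennreal (pi_star (\<omega> T)))"
    interpret M': pm M' T unfolding M'_def by (rule Q.pm_density[OF pim pos0 Di T])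
    have mkM': "markov_path T M'" using mk' unfolding beq M'_def .
    have ipos: "\<And>z. 0 < 1 / pi_star z" using pos by simp
    have im: "(\<lambda>z. 1 / pi_star z) \<in> borel_measurable borel" by measurable
    have h'i: "integrable M' (\<lambda>\<omega>. 1 / pi_star (\<omega> T))"
      unfolding M'_def
    proof (subst integrable_density)
      have "integrable Q (\<lambda>\<omega>. 1::real)" by simp
      moreover have "\<And>\<omega>. pi_star (\<omega> T) *\<^sub>R (1 / pi_star (\<omega> T)) = 1" using pos by (simp add: less_imp_neq[symmetric])
      ultimately show "integrable Q (\<lambda>x. pi_star (x T) *\<^sub>R (1 / pi_star (x T)))" by simp
    qed (auto simp: pos0)
    have "markov_path T (density M' (\<lambda>\<omega>. ennreal (1 / pi_star (\<omega> T))))"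
      by (rule M'.dens_markov[OF mkM' T im ipos h'i])
    moreover have "density M' (\<lambda>\<omega>. ennreal (1 / pi_star (\<omega> T))) = Q"
    proof -
      have "density M' (\<lambda>\<omega>. ennreal (1 / pi_star (\<omega> T)))
          = density Q (\<lambda>\<omega>. ennreal (pi_star (\<omega> T)) * ennreal (1 / pi_star (\<omega> T)))"
        unfolding M'_def by (rule density_density_eq) auto
      also have "(\<lambda>\<omega>. ennreal (pi_star (\<omega> T)) * ennreal (1 / pi_star (\<omega> T))) = (\<lambda>_. 1)"
      proof
        fix \<omega>
        have "ennreal (pi_star (\<omega> T)) * ennreal (1 / pi_star (\<omega> T)) = ennreal (pi_star (\<omega> T) * (1 / pi_star (\<omega> T)))"
          using pos0 by (simp add: ennreal_mult[symmetric])
        also have "\<dots> = 1" using pos[of "\<omega> T"] by simp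
        finally show "ennreal (pi_star (\<omega> T)) * ennreal (1 / pi_star (\<omega> T)) = 1" .
      qed
      finally show ?thesis by (simp add: density_1)
    qed
    ultimately show "markov_path T Q" by simp
  next
    assume mk: "markov_path T Q"
    show "markov_path T (Pi_star \<bind> K)"
      unfolding beq by (rule Q.dens_markov[OF mk T pim pos Di])
  qed
qed

end
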